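(* Let $\mathcal{X}$ be an input space, $\mathcal{Z}=\mathbb{R}^d$ a latent space equipped with a metric, and $f:\mathcal{X}\to\{0,1\}$ a (domain-invariant) labeling function. Let $p_S$ and $p_T$ be source and target distributions on $\mathcal{X}$. Let $g:\mathcal{X}\to\mathcal{Z}$ be continuous and let $\mathcal{H}$ be a class of functions $h:\mathcal{Z}\to[0,1]$, each $K$-Lipschitz. For $U\in\{S,T\}$ let $p_U^g$ be the push-forward of $p_U$ by $g$, and assume the class-conditional decomposition $p_U^g=\sum_{k} p_U(y=k)\,p_U(\cdot\mid y=k)$ where the label distributions and class-conditional densities satisfy the hypotheses: $p_S(y=k)>0$, the densities $p_S(\cdot\mid y=k),p_T(\cdot\mid y=k)$ are continuous and $p_S(z\mid y=k)>0$ for all $z,k$. Let $g_U(\cdot\mid z)$ be conditional distributions with $p_U(x)=\int g_U(x\mid z)\,p_U^g(z)\,dz$, and define $f_U^g(z)=\int f(x)\,g_U(x\mid z)\,dx$. Define the risks $$\varepsilon_U(h\circ g,f)=\mathbb{E}_{x\sim p_U}\big[|h(g(x))-f(x)|\big],\qquad \varepsilon_U^z(h,h')=\mathbb{E}_{z\sim p_U^g}\big[|h(z)-h'(z)|\big],$$ so that $\varepsilon_U(h\circ g,f)=\varepsilon_U^z(h,f_U^g)$. Let $h^\star\in\arg\min_{h\in\mathcal{H}}\varepsilon_S(h\circ g,f)$ (assumed to exist), let $S_k(z)=p_T(z\mid y=k)/p_S(z\mid y=k)$ and $w_k=p_T(y=k)/p_S(y=k)$, and let $$WD_1(p_S^g,p_T^g)=\sup_{\|v\|_L\le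 1}\ \mathbb{E}_{z\sim p_S^g}[v(z)]-\mathbb{E}_{z\sim p_T^g}[v(z)]$$ be the Wasserstein-1 distance (supremum over 1-Lipschitz functions $v:\mathcal{Z}\to\mathbb{R}$). Then for every $h\in\mathcal{H}$, $$\varepsilon_T(h\circ g,f)\le \varepsilon_S(h\circ g,f)+2K\cdot WD_1(p_S^g,p_T^g)+\Big[1+\sup_{k,z} w_k S_k(z)\Big]\varepsilon_S(h^\star\circ g,f)+\varepsilon_T^z(f_S^g,f_T^g),$$ where $\varepsilon_T^z(f_S^g,f_T^g)=\mathbb{E}_{z\sim p_T^g}\big[|f_T^g(z)-f_S^g(z)|\big]$.
   Context: Binary classification setting with labels in $\{0,1\}$ (classes $k\in\{0,1\}$). $p_U(y=k)$ is the label proportion of class $k$ in domain $U$, and $p_U(\cdot\mid y=k)$ the class-conditional density in the latent space $\mathcal{Z}$. The push-forward is $p_U^g(A)=p_U(g^{-1}(A))$ for measurable $A\subset\mathcal{Z}$. *)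

theory Defs
  imports "HOL-Probability.Probability"
begin

text \<open>With P = p_U this is eps_U(h o g, f) (taking
  h := h o g, h' := f); with P = push-forward of p_U by g it is eps_U^z(h, h').\<close>
definition risk :: "'a measure \<Rightarrow> ('a \<Rightarrow> real) \<Rightarrow> ('a \<Rightarrow> real) \<Rightarrow> real" where
  "risk P h h' = (\<integral>x. \<bar>h x - h' x\<bar> \<partial>P)"

definition WD1 :: "'a::metric_space measure \<Rightarrow> 'a measure \<Rightarrow> ereal" where
  "WD1 P Q = (SUP v \<in> {v. 1-lipschitz_on UNIV v \<and> integrable P v \<and> integrable Q v}.
                 ereal ((\<integral>z. v z \<partial>P) - (\<integral>z. v z \<partial>Q)))"

end

theory Submission
  imports Defs
begin

lemma mcs: "sets M = sets borel \<Longrightarrow> f \<in> measurable borel N \<Longrightarrow> f \<in> measurable M N"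
  using measurable_cong_sets[of M borel N N] by simp

lemma intgb:
  fixes \<phi> :: "'a::topological_space \<Rightarrow> real"
  assumes "prob_space M" "sets M = sets borel" "\<phi> \<in> borel_measurable borel" "\<And>z. \<bar>\<phi> z\<bar> \<le> B"
  shows "integrable M \<phi>"
proof -
  interpret prob_space M by fact
  show ?thesis by (rule integrable_const_bound[where B=B]) (use assms(4) mcs[OF assms(2,3)] in auto)
qed


lemma decomp:
  fixes p :: "'x::topological_space measure" and g :: "'x \<Rightarrow> 'z::topological_space"
    and f :: "'x \<Rightarrow> real" and \<phi> :: "'z \<Rightarrow> real" and k :: "'z \<Rightarrow> 'x measure"
  assumes prob: "prob_space p" and sets: "sets p = sets borel"
    and g[measurable]: "g \<in> borel_measurable borel"
    and f[measurable]: "f \<in> borel_measurable borel" and fb: "\<And>x. f x \<in> {0,1}"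
    and phi[measurable]: "\<phi> \<in> borel_measurable borel" and phb: "\<And>z. \<phi> z \<in> {0..1}"
    and k[measurable]: "k \<in> measurable borel (subprob_algebra borel)"
    and kp: "\<And>z. prob_space (k z)"
    and bind: "p = distr p borel g \<bind> k"
    and fib: "AE z in distr p borel g. AE x in k z. g x = z"
  shows "risk p (\<phi> \<circ> g) f = (\<integral>z. \<phi> z + (\<integral>x. f x \<partial>k z) - 2 * \<phi> z * (\<integral>x. f x \<partial>k z) \<partial>distr p borel g)"
proof -
  let ?\<mu> = "distr p borel g"
  have sk: "\<And>z. sets (k z) = sets borel" using subprob_measurableD(2)[OF k] by simp
  have gp[measurable]: "g \<in> measurable p borel" using sets g by (rule mcs)
  have fin: "finite_measure ?\<mu>"
    using prob by (intro prob_space.finite_measure prob_space.prob_space_distr) auto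
  have "risk p (\<phi> \<circ> g) f = (\<integral>x. \<bar>\<phi> (g x) - f x\<bar> \<partial>(?\<mu> \<bind> k))"
    unfolding risk_def by (subst bind[symmetric]) simp
  also have "\<dots> = (\<integral>z. (\<integral>x. \<bar>\<phi> (g x) - f x\<bar> \<partial>k z) \<partial>?\<mu>)"
  proof (rule integral_bind[where B=1 and B'=1])
    show "\<And>x. x \<in> space borel \<Longrightarrow> \<bar>\<bar>\<phi> (g x) - f x\<bar>\<bar> \<le> 1"
    proof -
      fix x
      have "f x \<in> {0,1}" "\<phi> (g x) \<in> {0..1}" using fb phb by auto
      then show "\<bar>\<bar>\<phi> (g x) - f x\<bar>\<bar> \<le> 1" by auto
    qed
    show "AE x in ?\<mu>. emeasure (k x) (space (k x)) \<le> ennreal 1"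
      using kp by (simp add: prob_space.emeasure_space_1)
    show "(\<lambda>x. \<bar>\<phi> (g x) - f x\<bar>) \<in> borel_measurable borel" by measurable
    show "k \<in> measurable ?\<mu> (subprob_algebra borel)"
      by (rule mcs[OF _ k]) simp
    show "finite_measure ?\<mu>" by (rule fin)
  qed
  also have "\<dots> = (\<integral>z. \<phi> z + (\<integral>x. f x \<partial>k z) - 2 * \<phi> z * (\<integral>x. f x \<partial>k z) \<partial>?\<mu>)"
  proof (rule integral_cong_AE)
    show "AE z in ?\<mu>. (\<integral>x. \<bar>\<phi> (g x) - f x\<bar> \<partial>k z) = \<phi> z + (\<integral>x. f x \<partial>k z) - 2 * \<phi> z * (\<integral>x. f x \<partial>k z)"
      using fib
    proof eventually_elim
      case (elim z)
      interpret P: prob_space "k z" by (rule kp)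
      have fm[measurable]: "f \<in> borel_measurable (k z)" by (rule mcs[OF sk f])
      have fi: "integrable (k z) f"
        proof (rule P.integrable_const_bound[where B=1])
          show "AE x in k z. norm (f x) \<le> 1" using fb by (intro AE_I2) (metis abs_0 abs_1 empty_iff insert_iff order_refl zero_le_one real_norm_def)
        qed (rule fm)
      have "(\<integral>x. \<bar>\<phi> (g x) - f x\<bar> \<partial>k z) = (\<integral>x. \<phi> z + f x - 2 * \<phi> z * f x \<partial>k z)"
      proof (rule integral_cong_AE)
        show "AE x in k z. \<bar>\<phi> (g x) - f x\<bar> = \<phi> z + f x - 2 * \<phi> z * f x"
          using elim
        proof eventually_elim
          case (elim x) then show ?case using fb[of x] phb[of z] by auto
        qed
          qed (rule mcs[OF sk], measurable)+
      also have "\<dots> = \<phi> z + (\<integral>x. f x \<partial>k z) - 2 * \<phi> z * (\<integral>x. f x \<partial>k z)"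
        using fi by (simp add: P.prob_space)
      finally show ?case .
    qed
    next
    have m1[measurable]: "(\<lambda>z. \<integral>x. \<bar>\<phi> (g x) - f x\<bar> \<partial>k z) \<in> borel_measurable borel"
      by (rule measurable_compose[OF k integral_measurable_subprob_algebra]) measurable
    have m2[measurable]: "(\<lambda>z. \<integral>x. f x \<partial>k z) \<in> borel_measurable borel"
      by (rule measurable_compose[OF k integral_measurable_subprob_algebra]) measurable
    show "(\<lambda>z. \<integral>x. \<bar>\<phi> (g x) - f x\<bar> \<partial>k z) \<in> borel_measurable ?\<mu>"
      by (rule mcs[OF _ m1]) simp
    show "(\<lambda>z. \<phi> z + (\<integral>x. f x \<partial>k z) - 2 * \<phi> z * (\<integral>x. f x \<partial>k z)) \<in> borel_measurable ?\<mu>"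
      by (rule mcs) (simp, measurable)
  qed
  finally show ?thesis .
qed



lemma lip_meas: "K-lipschitz_on UNIV (h::'z::metric_space \<Rightarrow> real) \<Longrightarrow> h \<in> borel_measurable borel"
  by (intro borel_measurable_continuous_onI lipschitz_on_continuous_on) 

lemma wd_step:
  fixes P Q :: "'z::metric_space measure" and h hs :: "'z \<Rightarrow> real"
  assumes P: "prob_space P" "sets P = sets borel" and Q: "prob_space Q" "sets Q = sets borel"
    and hl: "K-lipschitz_on UNIV h" and hsl: "K-lipschitz_on UNIV hs"
    and hb: "\<And>z. h z \<in> {0..1}" and hsb: "\<And>z. hs z \<in> {0..1}"
  shows "ereal (\<integral>z. \<bar>h z - hs z\<bar> \<partial>Q) \<le> ereal (\<integral>z. \<bar>h z - hs z\<bar> \<partial>P) + ereal (2*K) * WD1 P Q"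
proof -
  have K0: "K \<ge> 0" using hl by (simp add: lipschitz_on_def)
  have hm[measurable]: "h \<in> borel_measurable borel" "hs \<in> borel_measurable borel"
    using lip_meas hl hsl by blast+
  show ?thesis
  proof (cases "K = 0")
    case True
    have "\<And>x y. h x = h y" "\<And>x y. hs x = hs y" using hl hsl True by (auto simp: lipschitz_on_def)
    moreover obtain c0 where "c0 = \<bar>h undefined - hs undefined\<bar>" by blast
    ultimately have c: "\<And>z. \<bar>h z - hs z\<bar> = c0" by metis
    have "(\<integral>z. \<bar>h z - hs z\<bar> \<partial>Q) = c0" "(\<integral>z. \<bar>h z - hs z\<bar> \<partial>P) = c0"
      using P(1) Q(1) by (simp_all add: c prob_space.prob_space)
    then show ?thesis using True by (simp add: zero_ereal_def[symmetric])
  next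
    case False
    then have Kp: "K > 0" using K0 by simp
    define v where "v z = - \<bar>h z - hs z\<bar> / (2*K)" for z
    have vm[measurable]: "v \<in> borel_measurable borel" unfolding v_def by measurable
    have lip: "1-lipschitz_on UNIV v"
    proof (rule lipschitz_onI)
      fix x y :: 'z
      have a: "\<bar>h x - h y\<bar> \<le> K * dist x y" "\<bar>hs x - hs y\<bar> \<le> K * dist x y"
        using hl hsl by (auto simp: lipschitz_on_def dist_real_def)
      have "\<bar>\<bar>h x - hs x\<bar> - \<bar>h y - hs y\<bar>\<bar> \<le> 2*K*dist x y" using a by linarith
      then show "dist (v x) (v y) \<le> 1 * dist x y"
        using Kp by (simp add: v_def dist_real_def field_simps abs_minus_commute abs_divide)
    qed simp
    have vb: "\<bar>v z\<bar> \<le> 1/(2*K)" for z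
    proof -
      have "h z \<in> {0..1}" "hs z \<in> {0..1}" using hb hsb by blast+
      then have "\<bar>h z - hs z\<bar> \<le> 1" by auto
      moreover have "\<bar>v z\<bar> = \<bar>h z - hs z\<bar> / (2*K)" using Kp by (simp add: v_def abs_divide)
      ultimately show ?thesis using Kp by (simp add: divide_right_mono)
    qed
    have "integrable P v" "integrable Q v"
      using intgb[OF P(1,2) vm vb] intgb[OF Q(1,2) vm vb] by auto
    then have le: "ereal ((\<integral>z. v z \<partial>P) - (\<integral>z. v z \<partial>Q)) \<le> WD1 P Q"
      using lip unfolding WD1_def by (intro SUP_upper) auto
    have iv: "(\<integral>z. v z \<partial>M) = - (\<integral>z. \<bar>h z - hs z\<bar> \<partial>M) / (2*K)" for M :: "'z measure"
      unfolding v_def by simp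
    let ?IP = "\<integral>z. \<bar>h z - hs z\<bar> \<partial>P" and ?IQ = "\<integral>z. \<bar>h z - hs z\<bar> \<partial>Q"
    have "ereal (2*K) * ereal ((?IQ - ?IP)/(2*K)) \<le> ereal (2*K) * WD1 P Q"
      using le Kp by (intro ereal_mult_left_mono) (auto simp: iv field_simps)
    then have "ereal (?IQ - ?IP) \<le> ereal (2*K) * WD1 P Q" using Kp by simp
    then have "ereal ?IP + ereal (?IQ - ?IP) \<le> ereal ?IP + ereal (2*K) * WD1 P Q"
      by (rule add_left_mono)
    then show ?thesis by simp
  qed
qed



lemma dens_step:
  fixes \<rho>S \<rho>T F :: "'z::euclidean_space \<Rightarrow> real" and \<mu>S \<mu>T :: "'z measure" and Ms :: ereal
  assumes dS: "\<mu>S = density lborel (\<lambda>z. ennreal (\<rho>S z))" and dT: "\<mu>T = density lborel (\<lambda>z. ennreal (\<rho>T z))"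
    and mS[measurable]: "\<rho>S \<in> borel_measurable borel" and mT[measurable]: "\<rho>T \<in> borel_measurable borel"
    and pS: "\<And>z. \<rho>S z > 0" and pT: "\<And>z. \<rho>T z \<ge> 0"
    and probS: "prob_space \<mu>S" and probT: "prob_space \<mu>T"
    and Fm[measurable]: "F \<in> borel_measurable borel" and Fb: "\<And>z. F z \<in> {0..1}"
    and Ms0: "Ms \<ge> 0" and bound: "\<And>z. ereal (\<rho>T z) \<le> Ms * ereal (\<rho>S z)"
  shows "ereal (\<integral>z. F z \<partial>\<mu>T) \<le> Ms * ereal (\<integral>z. F z \<partial>\<mu>S)"
proof -
  have sS: "sets \<mu>S = sets borel" and sT: "sets \<mu>T = sets borel" using dS dT by auto
  have FmS[measurable]: "F \<in> borel_measurable \<mu>S" and FmT[measurable]: "F \<in> borel_measurable \<mu>T"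
    using mcs[OF sS Fm] mcs[OF sT Fm] by auto
  have iS: "integrable \<mu>S F" and iT: "integrable \<mu>T F"
    using Fb by (auto intro!: intgb[OF probS sS Fm, where B=1] intgb[OF probT sT Fm, where B=1])
  have IT0: "(\<integral>z. F z \<partial>\<mu>T) \<ge> 0" and IS0: "(\<integral>z. F z \<partial>\<mu>S) \<ge> 0" using Fb by (auto intro: integral_nonneg)
  show ?thesis
  proof (cases Ms)
    case PInf
    show ?thesis
    proof (cases "(\<integral>z. F z \<partial>\<mu>S) = 0")
      case True
      then have "AE z in \<mu>S. F z = 0"
        using iS Fb by (subst integral_nonneg_eq_0_iff_AE[symmetric]) auto
      then have "AE z in lborel. F z = 0" using pS unfolding dS
        by (subst (asm) AE_density) auto
      then have "AE z in \<mu>T. F z = 0" unfolding dT by (subst AE_density) (auto elim: AE_mp)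
      then have "(\<integral>z. F z \<partial>\<mu>T) = 0" by (simp add: integral_eq_zero_AE)
      then show ?thesis using True PInf by simp
    next
      case False
      then show ?thesis using PInf IS0 IT0 by simp
    qed
  next
    case (real M)
    then have M0: "M \<ge> 0" using Ms0 by simp
    have b: "\<rho>T z \<le> M * \<rho>S z" for z using bound[of z] real by simp
    have "ennreal (\<integral>z. F z \<partial>\<mu>T) = (\<integral>\<^sup>+z. ennreal (F z) \<partial>\<mu>T)"
      using iT Fb by (subst nn_integral_eq_integral) auto
    also have "\<dots> = (\<integral>\<^sup>+z. ennreal (\<rho>T z) * ennreal (F z) \<partial>lborel)"
      unfolding dT by (subst nn_integral_density) auto
    also have "\<dots> \<le> (\<integral>\<^sup>+z. ennreal M * (ennreal (\<rho>S z) * ennreal (F z)) \<partial>lborel)"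
    proof (rule nn_integral_mono)
      fix x
      have nn: "0 \<le> \<rho>T x" "0 \<le> F x" "0 \<le> \<rho>S x" "0 \<le> \<rho>S x * F x"
        using pT[of x] pS[of x] Fb[of x] by auto
      have le: "\<rho>T x * F x \<le> (M * \<rho>S x) * F x" using b[of x] nn by (intro mult_right_mono) auto
      then have "ennreal (\<rho>T x * F x) \<le> ennreal (M * (\<rho>S x * F x))" by (intro ennreal_leI) (simp add: mult.assoc)
      then show "ennreal (\<rho>T x) * ennreal (F x) \<le> ennreal M * (ennreal (\<rho>S x) * ennreal (F x))"
        using nn M0 by (simp add: ennreal_mult)
    qed
    also have "\<dots> = ennreal M * (\<integral>\<^sup>+z. ennreal (\<rho>S z) * ennreal (F z) \<partial>lborel)"
      by (subst nn_integral_cmult) auto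
    also have "(\<integral>\<^sup>+z. ennreal (\<rho>S z) * ennreal (F z) \<partial>lborel) = (\<integral>\<^sup>+z. ennreal (F z) \<partial>\<mu>S)"
      unfolding dS by (subst nn_integral_density) auto
    also have "\<dots> = ennreal (\<integral>z. F z \<partial>\<mu>S)"
      using iS Fb by (subst nn_integral_eq_integral) auto
    finally have "ennreal (\<integral>z. F z \<partial>\<mu>T) \<le> ennreal (M * (\<integral>z. F z \<partial>\<mu>S))"
      using M0 IS0 by (simp add: ennreal_mult)
    then have "(\<integral>z. F z \<partial>\<mu>T) \<le> M * (\<integral>z. F z \<partial>\<mu>S)"
      using M0 IS0 by (simp add: ennreal_le_iff)
    then show ?thesis using real by simp
  next
    case MInf then show ?thesis using Ms0 by simp
  qed
qed



lemma pw1: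
  fixes a b c d :: real
  assumes "a \<in> {0..1}" "b \<in> {0..1}" "c \<in> {0..1}" "d \<in> {0..1}"
  shows "a + d - 2*a*d \<le> \<bar>a - c\<bar> + (c + b - 2*c*b) + \<bar>d - b\<bar>"
proof -
  have e: "a + d - 2*a*d = (a - c)*(1 - 2*b) + (c + b - 2*c*b) + (d - b)*(1 - 2*a)" by algebra
  have "\<bar>1 - 2*b\<bar> \<le> 1" "\<bar>1 - 2*a\<bar> \<le> 1" using assms by auto
  have "(a - c)*(1 - 2*b) \<le> \<bar>a - c\<bar>" "(d - b)*(1 - 2*a) \<le> \<bar>d - b\<bar>"
  proof -
    have "(a - c)*(1 - 2*b) \<le> \<bar>a - c\<bar> * \<bar>1 - 2*b\<bar>" using abs_ge_self[of "(a - c)*(1 - 2*b)"] by (simp add: abs_mult)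
    also have "\<dots> \<le> \<bar>a - c\<bar>" using \<open>\<bar>1 - 2*b\<bar> \<le> 1\<close> by (intro mult_left_le) auto
    finally show "(a - c)*(1 - 2*b) \<le> \<bar>a - c\<bar>" .
    have "(d - b)*(1 - 2*a) \<le> \<bar>d - b\<bar> * \<bar>1 - 2*a\<bar>" using abs_ge_self[of "(d - b)*(1 - 2*a)"] by (simp add: abs_mult)
    also have "\<dots> \<le> \<bar>d - b\<bar>" using \<open>\<bar>1 - 2*a\<bar> \<le> 1\<close> by (intro mult_left_le) auto
    finally show "(d - b)*(1 - 2*a) \<le> \<bar>d - b\<bar>" .
  qed
  then show ?thesis unfolding e by linarith
qed

lemma pw2:
  fixes a b c :: real
  assumes "a \<in> {0..1}" "b \<in> {0..1}" "c \<in> {0..1}"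
  shows "\<bar>a - c\<bar> \<le> (a + b - 2*a*b) + (c + b - 2*c*b)"
proof -
  have "\<bar>a - b\<bar> \<le> a + b - 2*a*b" "\<bar>c - b\<bar> \<le> c + b - 2*c*b"
    using assms by (auto simp: abs_if algebra_simps mult_left_le mult_le_one mult_right_le_one_le
        intro: mult_left_le_one_le)
  then show ?thesis by linarith
qed

lemma pw3:
  fixes a b :: real
  assumes "a \<in> {0..1}" "b \<in> {0..1}"
  shows "a + b - 2*a*b \<in> {0..1}"
proof -
  have "a*b \<le> a" "a*b \<le> b" using assms by (auto intro: mult_left_le mult_right_le_one_le mult_left_le_one_le)
  moreover have "(1-a)*(1-b) \<ge> 0" "a*b \<ge> 0" using assms by auto
  ultimately show ?thesis by (auto simp: algebra_simps)
qed

theorem theorem1: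
  fixes pS pT :: "'x::topological_space measure"
    and g :: "'x \<Rightarrow> real^'d"
    and f :: "'x \<Rightarrow> real"
    and H :: "(real^'d \<Rightarrow> real) set"
    and K :: real
    and piS piT :: "nat \<Rightarrow> real"
    and qS qT :: "nat \<Rightarrow> real^'d \<Rightarrow> real"
    and kS kT :: "real^'d \<Rightarrow> 'x measure"
    and hstar h :: "real^'d \<Rightarrow> real"
  assumes probS: "prob_space pS" and setsS: "sets pS = sets borel"
    and probT: "prob_space pT" and setsT: "sets pT = sets borel"
    and g_cont: "continuous_on UNIV g"
    and f_meas: "f \<in> borel_measurable borel"
    and f_bin: "\<And>x. f x \<in> {0, 1}"
    and H_range: "\<And>h' z. h' \<in> H \<Longrightarrow> h' z \<in> {0..1}"
    and H_lip: "\<And>h'. h' \<in> H \<Longrightarrow> K-lipschitz_on UNIV h'"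
    \<comment> \<open>label proportions\<close>
    and piS_pos: "\<And>k. k \<in> {0, 1} \<Longrightarrow> piS k > 0"
    and piT_nonneg: "\<And>k. k \<in> {0, 1} \<Longrightarrow> piT k \<ge> 0"
    and piS_sum: "piS 0 + piS 1 = 1"
    and piT_sum: "piT 0 + piT 1 = 1"
    \<comment> \<open>class-conditional densities on the latent space (w.r.t. Lebesgue measure)\<close>
    and qS_cont: "\<And>k. k \<in> {0, 1} \<Longrightarrow> continuous_on UNIV (qS k)"
    and qT_cont: "\<And>k. k \<in> {0, 1} \<Longrightarrow> continuous_on UNIV (qT k)"
    and qS_pos: "\<And>k z. k \<in> {0, 1} \<Longrightarrow> qS k z > 0"
    and qT_nonneg: "\<And>k z. k \<in> {0, 1} \<Longrightarrow> qT k z \<ge> 0"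
    and qS_prob: "\<And>k. k \<in> {0, 1} \<Longrightarrow> (\<integral>\<^sup>+ z. ennreal (qS k z) \<partial>lborel) = 1"
    and qT_prob: "\<And>k. k \<in> {0, 1} \<Longrightarrow> (\<integral>\<^sup>+ z. ennreal (qT k z) \<partial>lborel) = 1"
    \<comment> \<open>class-conditional decomposition of the push-forwards\<close>
    and decS: "distr pS borel g = density lborel (\<lambda>z. \<Sum>k\<in>{0, 1}. piS k * qS k z)"
    and decT: "distr pT borel g = density lborel (\<lambda>z. \<Sum>k\<in>{0, 1}. piT k * qT k z)"
    \<comment> \<open>conditional distributions g_U(. | z): disintegration of p_U along g\<close>
    and kS_meas: "kS \<in> measurable borel (subprob_algebra borel)"
    and kT_meas: "kT \<in> measurable borel (subprob_algebra borel)"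
    and kS_prob: "\<And>z. prob_space (kS z)"
    and kT_prob: "\<And>z. prob_space (kT z)"
    and kS_bind: "pS = distr pS borel g \<bind> kS"
    and kT_bind: "pT = distr pT borel g \<bind> kT"
    and kS_fiber: "AE z in distr pS borel g. AE x in kS z. g x = z"
    and kT_fiber: "AE z in distr pT borel g. AE x in kT z. g x = z"
    \<comment> \<open>optimal hypothesis on the source\<close>
    and hstar_in: "hstar \<in> H"
    and hstar_min: "\<And>h'. h' \<in> H \<Longrightarrow> risk pS (h' \<circ> g) f \<ge> risk pS (hstar \<circ> g) f"
    and h_in: "h \<in> H"
  shows "ereal (risk pT (h \<circ> g) f)
           \<le> ereal (risk pS (h \<circ> g) f)
             + ereal (2 * K) * WD1 (distr pS borel g) (distr pT borel g)
             + (1 + (SUP kz \<in> {0, 1} \<times> UNIV.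
                       ereal ((piT (fst kz) / piS (fst kz)) * (qT (fst kz) (snd kz) / qS (fst kz) (snd kz)))))
               * ereal (risk pS (hstar \<circ> g) f)
             + ereal (risk (distr pT borel g) (\<lambda>z. \<integral>x. f x \<partial>kT z) (\<lambda>z. \<integral>x. f x \<partial>kS z))"

proof -
  define \<mu>S where "\<mu>S = distr pS borel g"
  define \<mu>T where "\<mu>T = distr pT borel g"
  define fS where "fS z = (\<integral>x. f x \<partial>kS z)" for z
  define fT where "fT z = (\<integral>x. f x \<partial>kT z)" for z
  define \<rho>S where "\<rho>S z = (\<Sum>k\<in>{0, 1::nat}. piS k * qS k z)" for z
  define \<rho>T where "\<rho>T z = (\<Sum>k\<in>{0, 1::nat}. piT k * qT k z)" for z
  define Ms where "Ms = (SUP kz \<in> {0, 1::nat} \<times> UNIV.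
                       ereal ((piT (fst kz) / piS (fst kz)) * (qT (fst kz) (snd kz) / qS (fst kz) (snd kz))))"
  have gm[measurable]: "g \<in> borel_measurable borel"
    using g_cont by (intro borel_measurable_continuous_onI)
  have gS[measurable]: "g \<in> measurable pS borel" and gT[measurable]: "g \<in> measurable pT borel"
    using mcs[OF setsS gm] mcs[OF setsT gm] by auto
  have pmS: "prob_space \<mu>S" and pmT: "prob_space \<mu>T"
    unfolding \<mu>S_def \<mu>T_def using probS probT by (auto intro: prob_space.prob_space_distr)
  have ssS: "sets \<mu>S = sets borel" and ssT: "sets \<mu>T = sets borel" unfolding \<mu>S_def \<mu>T_def by auto
  have fm[measurable]: "f \<in> borel_measurable borel" by (rule f_meas)
  have fSm[measurable]: "fS \<in> borel_measurable borel"
    unfolding fS_def by (rule measurable_compose[OF kS_meas integral_measurable_subprob_algebra]) simp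
  have fTm[measurable]: "fT \<in> borel_measurable borel"
    unfolding fT_def by (rule measurable_compose[OF kT_meas integral_measurable_subprob_algebra]) simp
  have frange: "(\<integral>x. f x \<partial>k z) \<in> {0..1}" if kp: "\<And>z. prob_space (k z)"
      and km: "k \<in> measurable borel (subprob_algebra borel)" for k :: "real^'d \<Rightarrow> 'x measure" and z
  proof -
    interpret P: prob_space "k z" by (rule kp)
    have sk: "sets (k z) = sets borel" using subprob_measurableD(2)[OF km] by simp
    have fmk[measurable]: "f \<in> borel_measurable (k z)" by (rule mcs[OF sk f_meas])
    have fi: "integrable (k z) f"
      proof (rule P.integrable_const_bound[where B=1])
        show "AE x in k z. norm (f x) \<le> 1" using f_bin by (intro AE_I2) (metis abs_0 abs_1 empty_iff insert_iff order_refl zero_le_one real_norm_def)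
      qed (rule fmk)
    have "(\<integral>x. f x \<partial>k z) \<le> (\<integral>x. 1 \<partial>k z)"
    proof (rule integral_mono)
      show "\<And>x. x \<in> space (k z) \<Longrightarrow> f x \<le> 1" using f_bin by (metis empty_iff insert_iff order_refl zero_le_one)
    qed (use fi in auto)
    moreover have "(\<integral>x. f x \<partial>k z) \<ge> 0"
      by (rule Bochner_Integration.integral_nonneg) (use f_bin in \<open>metis empty_iff insert_iff order_refl zero_le_one\<close>)
    ultimately show ?thesis by (simp add: P.prob_space)
  qed
  have fSr: "\<And>z. fS z \<in> {0..1}" unfolding fS_def using frange[OF kS_prob kS_meas] .
  have fTr: "\<And>z. fT z \<in> {0..1}" unfolding fT_def using frange[OF kT_prob kT_meas] .
  have hl: "K-lipschitz_on UNIV h" and hsl: "K-lipschitz_on UNIV hstar"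
    using H_lip h_in hstar_in by auto
  have hr: "\<And>z. h z \<in> {0..1}" and hsr: "\<And>z. hstar z \<in> {0..1}"
    using H_range h_in hstar_in by auto
  have hm[measurable]: "h \<in> borel_measurable borel" "hstar \<in> borel_measurable borel"
    using lip_meas hl hsl by blast+
  have intg: "integrable M \<phi>" if "prob_space M" "sets M = sets borel" "\<phi> \<in> borel_measurable borel"
      "\<And>z. \<bar>\<phi> z\<bar> \<le> 1" for M :: "(real^'d) measure" and \<phi> :: "real^'d \<Rightarrow> real"
    by (rule intgb[OF that])
  define D where "D a b = a + b - 2*a*b" for a b :: real
  have Dr: "\<And>a b. a \<in> {0..1} \<Longrightarrow> b \<in> {0..1} \<Longrightarrow> D a b \<in> {0..1}" unfolding D_def by (rule pw3)
  have Dabs: "\<And>a b. a \<in> {0..1} \<Longrightarrow> b \<in> {0..1} \<Longrightarrow> \<bar>D a b\<bar> \<le> 1"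
  proof -
    fix a b :: real assume "a \<in> {0..1}" "b \<in> {0..1}"
    then have "D a b \<in> {0..1}" by (rule Dr)
    then show "\<bar>D a b\<bar> \<le> 1" by simp
  qed
  have habs: "\<And>z. \<bar>\<bar>h z - hstar z\<bar>\<bar> \<le> 1" 
  proof -
    fix z have "h z \<in> {0..1}" "hstar z \<in> {0..1}" using hr hsr by blast+
    then show "\<bar>\<bar>h z - hstar z\<bar>\<bar> \<le> 1" by auto
  qed
  have fabs: "\<And>z. \<bar>\<bar>fT z - fS z\<bar>\<bar> \<le> 1" 
  proof -
    fix z have "fT z \<in> {0..1}" "fS z \<in> {0..1}" using fTr fSr by blast+
    then show "\<bar>\<bar>fT z - fS z\<bar>\<bar> \<le> 1" by auto
  qed
  have eT: "risk pT (h \<circ> g) f = (\<integral>z. D (h z) (fT z) \<partial>\<mu>T)"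
    unfolding \<mu>T_def fT_def D_def
    by (rule decomp[OF probT setsT gm f_meas f_bin hm(1) hr kT_meas kT_prob kT_bind kT_fiber])
  have eS: "risk pS (h \<circ> g) f = (\<integral>z. D (h z) (fS z) \<partial>\<mu>S)"
    unfolding \<mu>S_def fS_def D_def
    by (rule decomp[OF probS setsS gm f_meas f_bin hm(1) hr kS_meas kS_prob kS_bind kS_fiber])
  have eSs: "risk pS (hstar \<circ> g) f = (\<integral>z. D (hstar z) (fS z) \<partial>\<mu>S)"
    unfolding \<mu>S_def fS_def D_def
    by (rule decomp[OF probS setsS gm f_meas f_bin hm(2) hsr kS_meas kS_prob kS_bind kS_fiber])
  have cdef: "risk (distr pT borel g) (\<lambda>z. \<integral>x. f x \<partial>kT z) (\<lambda>z. \<integral>x. f x \<partial>kS z) = (\<integral>z. \<bar>fT z - fS z\<bar> \<partial>\<mu>T)"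
    unfolding risk_def \<mu>T_def fT_def fS_def ..
  have i1: "integrable \<mu>T (\<lambda>z. D (h z) (fT z))" "integrable \<mu>T (\<lambda>z. \<bar>h z - hstar z\<bar>)"
    "integrable \<mu>T (\<lambda>z. D (hstar z) (fS z))" "integrable \<mu>T (\<lambda>z. \<bar>fT z - fS z\<bar>)"
    using Dabs hr hsr fSr fTr habs fabs by (auto intro!: intg[OF pmT ssT] simp: D_def)
  have i2: "integrable \<mu>S (\<lambda>z. D (h z) (fS z))" "integrable \<mu>S (\<lambda>z. \<bar>h z - hstar z\<bar>)"
    "integrable \<mu>S (\<lambda>z. D (hstar z) (fS z))"
    using Dabs hr hsr fSr habs by (auto intro!: intg[OF pmS ssS] simp: D_def)
  have s1: "(\<integral>z. D (h z) (fT z) \<partial>\<mu>T) \<le> (\<integral>z. \<bar>h z - hstar z\<bar> \<partial>\<mu>T) + (\<integral>z. D (hstar z) (fS z) \<partial>\<mu>T)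
            + (\<integral>z. \<bar>fT z - fS z\<bar> \<partial>\<mu>T)"
  proof -
    have "(\<integral>z. D (h z) (fT z) \<partial>\<mu>T) \<le> (\<integral>z. \<bar>h z - hstar z\<bar> + D (hstar z) (fS z) + \<bar>fT z - fS z\<bar> \<partial>\<mu>T)"
      using i1 hr hsr fSr fTr unfolding D_def by (intro integral_mono pw1) auto
    also have "\<dots> = (\<integral>z. \<bar>h z - hstar z\<bar> \<partial>\<mu>T) + (\<integral>z. D (hstar z) (fS z) \<partial>\<mu>T) + (\<integral>z. \<bar>fT z - fS z\<bar> \<partial>\<mu>T)"
      using i1 by simp
    finally show ?thesis .
  qed
  have s2: "ereal (\<integral>z. \<bar>h z - hstar z\<bar> \<partial>\<mu>T) \<le> ereal (\<integral>z. \<bar>h z - hstar z\<bar> \<partial>\<mu>S) + ereal (2*K) * WD1 \<mu>S \<mu>T"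
    by (rule wd_step[OF pmS ssS pmT ssT hl hsl hr hsr])
  have s3: "(\<integral>z. \<bar>h z - hstar z\<bar> \<partial>\<mu>S) \<le> (\<integral>z. D (h z) (fS z) \<partial>\<mu>S) + (\<integral>z. D (hstar z) (fS z) \<partial>\<mu>S)"
  proof -
    have "(\<integral>z. \<bar>h z - hstar z\<bar> \<partial>\<mu>S) \<le> (\<integral>z. D (h z) (fS z) + D (hstar z) (fS z) \<partial>\<mu>S)"
    proof (rule integral_mono)
      show "integrable \<mu>S (\<lambda>z. \<bar>h z - hstar z\<bar>)" by (rule i2(2))
      show "integrable \<mu>S (\<lambda>z. D (h z) (fS z) + D (hstar z) (fS z))"
        by (rule Bochner_Integration.integrable_add[OF i2(1) i2(3)])
      fix z show "\<bar>h z - hstar z\<bar> \<le> D (h z) (fS z) + D (hstar z) (fS z)"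
        unfolding D_def by (rule pw2[OF hr fSr hsr])
    qed
    also have "\<dots> = (\<integral>z. D (h z) (fS z) \<partial>\<mu>S) + (\<integral>z. D (hstar z) (fS z) \<partial>\<mu>S)"
      using i2 by simp
    finally show ?thesis .
  qed
  have Ms0: "Ms \<ge> 0"
  proof -
    have "ereal ((piT 0 / piS 0) * (qT 0 0 / qS 0 0)) \<le> Ms"
      unfolding Ms_def by (rule SUP_upper2[where i="(0,0)"]) auto
    moreover have "(piT 0 / piS 0) * (qT 0 0 / qS 0 0) \<ge> 0"
      using piT_nonneg[of 0] piS_pos[of 0] qT_nonneg[of 0 0] qS_pos[of 0 0] by simp
    ultimately show ?thesis by (meson ereal_less_eq(5) order_trans)
  qed
  have qSm: "qS k \<in> borel_measurable borel" "qT k \<in> borel_measurable borel" if "k \<in> {0,1}" for k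
    using qS_cont[OF that] qT_cont[OF that] by (auto intro: borel_measurable_continuous_onI)
  have \<rho>Sm[measurable]: "\<rho>S \<in> borel_measurable borel" and \<rho>Tm[measurable]: "\<rho>T \<in> borel_measurable borel"
    unfolding \<rho>S_def \<rho>T_def
    by (intro borel_measurable_sum borel_measurable_times borel_measurable_const qSm; simp)+
  have \<rho>Sp: "\<And>z. \<rho>S z > 0" unfolding \<rho>S_def using piS_pos qS_pos
    by (simp add: add_pos_pos)
  have \<rho>Tp: "\<And>z. \<rho>T z \<ge> 0" unfolding \<rho>T_def using piT_nonneg qT_nonneg by simp
  have bound: "ereal (\<rho>T z) \<le> Ms * ereal (\<rho>S z)" for z
  proof (cases Ms)
    case PInf then show ?thesis using \<rho>Sp[of z] by simp
  next
    case MInf then show ?thesis using Ms0 by simp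
  next
    case (real M)
    have w: "(piT k / piS k) * (qT k z / qS k z) \<le> M" if "k \<in> {0,1}" for k
    proof -
      have "ereal ((piT k / piS k) * (qT k z / qS k z)) \<le> Ms"
        unfolding Ms_def by (rule SUP_upper2[where i="(k,z)"]) (use that in auto)
      then show ?thesis using real by simp
    qed
    have e: "piT k * qT k z = ((piT k / piS k) * (qT k z / qS k z)) * (piS k * qS k z)" if "k \<in> {0,1}" for k
      using piS_pos[OF that] qS_pos[OF that, of z] by (simp add: field_simps)
    have le: "piT k * qT k z \<le> M * (piS k * qS k z)" if "k \<in> {0,1}" for k
      unfolding e[OF that] using w[OF that] piS_pos[OF that] qS_pos[OF that, of z]
      by (intro mult_right_mono) auto
    have "\<rho>T z \<le> M * \<rho>S z" unfolding \<rho>S_def \<rho>T_def using le[of 0] le[of 1] by (simp add: algebra_simps)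
    then show ?thesis using real by simp
  qed
  have s4: "ereal (\<integral>z. D (hstar z) (fS z) \<partial>\<mu>T) \<le> Ms * ereal (\<integral>z. D (hstar z) (fS z) \<partial>\<mu>S)"
  proof (rule dens_step[OF _ _ \<rho>Sm \<rho>Tm \<rho>Sp \<rho>Tp pmS pmT _ _ Ms0 bound])
    show "\<mu>S = density lborel (\<lambda>z. ennreal (\<rho>S z))" unfolding \<mu>S_def \<rho>S_def using decS by simp
    show "\<mu>T = density lborel (\<lambda>z. ennreal (\<rho>T z))" unfolding \<mu>T_def \<rho>T_def using decT by simp
    show "(\<lambda>z. D (hstar z) (fS z)) \<in> borel_measurable borel" unfolding D_def by measurable
    show "\<And>z. D (hstar z) (fS z) \<in> {0..1}" using Dr hsr fSr by blast
  qed
  let ?a = "\<integral>z. D (h z) (fS z) \<partial>\<mu>S" and ?b = "\<integral>z. D (hstar z) (fS z) \<partial>\<mu>S"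
    and ?c = "\<integral>z. \<bar>fT z - fS z\<bar> \<partial>\<mu>T" and ?A = "\<integral>z. \<bar>h z - hstar z\<bar> \<partial>\<mu>T"
    and ?AS = "\<integral>z. \<bar>h z - hstar z\<bar> \<partial>\<mu>S" and ?B = "\<integral>z. D (hstar z) (fS z) \<partial>\<mu>T"
    and ?W = "ereal (2*K) * WD1 \<mu>S \<mu>T"
  have b0: "?b \<ge> 0"
  proof (rule Bochner_Integration.integral_nonneg)
    fix z show "0 \<le> D (hstar z) (fS z)" using Dr[OF hsr fSr] by simp
  qed
  have dist: "(1 + Ms) * ereal ?b = ereal ?b + Ms * ereal ?b"
  proof (cases Ms)
    case (real r) then show ?thesis by (simp add: field_simps)
  next
    case PInf then show ?thesis using b0 by (cases "?b = 0") auto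
  next
    case MInf then show ?thesis using Ms0 by simp
  qed
  have "ereal (risk pT (h \<circ> g) f) \<le> ereal ?A + ereal ?B + ereal ?c"
    using s1 unfolding eT by simp
  also have "\<dots> \<le> (ereal ?AS + ?W) + Ms * ereal ?b + ereal ?c"
    using s2 s4 by (intro add_mono) auto
  also have "\<dots> \<le> (ereal ?a + ereal ?b + ?W) + Ms * ereal ?b + ereal ?c"
    using s3 by (intro add_mono) auto
  also have "\<dots> = ereal ?a + ?W + (1 + Ms) * ereal ?b + ereal ?c"
    unfolding dist by (simp only: ac_simps)
  finally have final: "ereal (risk pT (h \<circ> g) f) \<le> ereal ?a + ?W + (1 + Ms) * ereal ?b + ereal ?c" .
  show ?thesis
    using final unfolding eS[symmetric] eSs[symmetric] cdef[symmetric]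
    by (simp only: Ms_def \<mu>S_def \<mu>T_def)
qed


end
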